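(* If $G$ is a $2$-connected graph of order $n$ with girth $g$, then $F_c(G)\le n-g+2$.
   Context: Forcing process: given a set of initially colored vertices, at each step a colored vertex with exactly one non-colored neighbor forces (colors) that neighbor. A set $S\subseteq V(G)$ is a forcing set if iterating this process from $S$ eventually colors all vertices; it is a connected forcing set if moreover the induced subgraph $G[S]$ is connected. $F_c(G)$ is the minimum cardinality of a connected forcing set of $G$. The girth of $G$ is the length of a shortest cycle in $G$. *)

theory Defs
  imports Main
begin

definition simple_graph :: "'a set \<Rightarrow> ('a \<Rightarrow> 'a \<Rightarrow> bool) \<Rightarrow> bool" where
  "simple_graph V E \<longleftrightarrow> finite V \<and> (\<forall>x y. E x y \<longrightarrow> x \<in> V \<and> y \<in> V)
     \<and> (\<forall>x y. E x y \<longrightarrow> E y x) \<and> (\<forall>x. \<not> E x x)"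

definition induced_connected :: "('a \<Rightarrow> 'a \<Rightarrow> bool) \<Rightarrow> 'a set \<Rightarrow> bool" where
  "induced_connected E S \<longleftrightarrow>
     (\<forall>x\<in>S. \<forall>y\<in>S. (\<lambda>u v. E u v \<and> u \<in> S \<and> v \<in> S)\<^sup>*\<^sup>* x y)"

definition two_connected :: "'a set \<Rightarrow> ('a \<Rightarrow> 'a \<Rightarrow> bool) \<Rightarrow> bool" where
  "two_connected V E \<longleftrightarrow> card V \<ge> 3 \<and> induced_connected E V
     \<and> (\<forall>v\<in>V. induced_connected E (V - {v}))"

definition is_cycle :: "'a set \<Rightarrow> ('a \<Rightarrow> 'a \<Rightarrow> bool) \<Rightarrow> 'a list \<Rightarrow> bool" where
  "is_cycle V E cs \<longleftrightarrow> length cs \<ge> 3 \<and> distinct cs \<and> set cs \<subseteq> V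
     \<and> (\<forall>i < length cs. E (cs ! i) (cs ! ((i + 1) mod length cs)))"

definition girth :: "'a set \<Rightarrow> ('a \<Rightarrow> 'a \<Rightarrow> bool) \<Rightarrow> nat" where
  "girth V E = (LEAST k. \<exists>cs. is_cycle V E cs \<and> length cs = k)"

text \<open>Vertices eventually coloured by the forcing process started from S:
  a coloured vertex u all of whose neighbours other than w are coloured forces w.
  (The final coloured set of the process is this least closed set, independent of
  the order of forcings.)\<close>
inductive_set forced :: "('a \<Rightarrow> 'a \<Rightarrow> bool) \<Rightarrow> 'a set \<Rightarrow> 'a set"
  for E :: "'a \<Rightarrow> 'a \<Rightarrow> bool" and S :: "'a set" where
  init: "x \<in> S \<Longrightarrow> x \<in> forced E S"
| force: "u \<in> forced E S \<Longrightarrow> E u w \<Longrightarrow>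
          (\<forall>w'. E u w' \<and> w' \<noteq> w \<longrightarrow> w' \<in> forced E S) \<Longrightarrow> w \<in> forced E S"

definition forcing_set :: "'a set \<Rightarrow> ('a \<Rightarrow> 'a \<Rightarrow> bool) \<Rightarrow> 'a set \<Rightarrow> bool" where
  "forcing_set V E S \<longleftrightarrow> S \<subseteq> V \<and> V \<subseteq> forced E S"

definition connected_forcing_set :: "'a set \<Rightarrow> ('a \<Rightarrow> 'a \<Rightarrow> bool) \<Rightarrow> 'a set \<Rightarrow> bool" where
  "connected_forcing_set V E S \<longleftrightarrow> forcing_set V E S \<and> induced_connected E S"

definition Fc :: "'a set \<Rightarrow> ('a \<Rightarrow> 'a \<Rightarrow> bool) \<Rightarrow> nat" where
  "Fc V E = (LEAST k. \<exists>S. connected_forcing_set V E S \<and> card S = k)"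

end

theory Submission
  imports Defs
begin

definition rs :: "('a \<Rightarrow> 'a \<Rightarrow> bool) \<Rightarrow> 'a set \<Rightarrow> 'a \<Rightarrow> 'a \<Rightarrow> bool" where
  "rs E A u v \<longleftrightarrow> E u v \<and> u \<in> A \<and> v \<in> A"

lemma rs_eq: "rs E A = (\<lambda>u v. E u v \<and> u \<in> A \<and> v \<in> A)"
  by (auto simp: rs_def fun_eq_iff)

lemma ic_def': "induced_connected E S \<longleftrightarrow> (\<forall>x\<in>S. \<forall>y\<in>S. (rs E S)\<^sup>*\<^sup>* x y)"
  by (simp add: induced_connected_def rs_eq)

lemma rs_mono: assumes "(rs E A)\<^sup>*\<^sup>* x y" "A \<subseteq> B" shows "(rs E B)\<^sup>*\<^sup>* x y"
  using assms(1)
proof (induction rule: rtranclp_induct)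
  case base then show ?case by simp
next
  case (step y z)
  then have "rs E B y z" using assms(2) by (auto simp: rs_def)
  with step.IH show ?case by (rule rtranclp.rtrancl_into_rtrancl)
qed

lemma rs_in: "(rs E A)\<^sup>*\<^sup>* x y \<Longrightarrow> x \<in> A \<Longrightarrow> y \<in> A"
  by (induction rule: rtranclp_induct) (auto simp: rs_def)

lemma rs_sym: assumes "\<And>u v. E u v \<Longrightarrow> E v u" "(rs E A)\<^sup>*\<^sup>* x y" shows "(rs E A)\<^sup>*\<^sup>* y x"
  using assms(2)
proof (induction rule: rtranclp_induct)
  case base then show ?case by simp
next
  case (step y z)
  then have "rs E A z y" using assms(1) by (auto simp: rs_def)
  then show ?case using step.IH by (rule converse_rtranclp_into_rtranclp)
qed

lemma first_exit:
  "(rs E A)\<^sup>*\<^sup>* x y \<Longrightarrow> x \<in> D \<Longrightarrow> y \<notin> D \<Longrightarrow>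
   \<exists>a b. (rs E (A \<inter> D))\<^sup>*\<^sup>* x a \<and> a \<in> D \<and> rs E A a b \<and> b \<notin> D"
proof (induction rule: converse_rtranclp_induct)
  case base then show ?case by simp
next
  case (step x x')
  show ?case
  proof (cases "x' \<in> D")
    case True
    then obtain a b where ab: "(rs E (A \<inter> D))\<^sup>*\<^sup>* x' a" "a \<in> D" "rs E A a b" "b \<notin> D"
      using step.IH step.prems(2) by blast
    have "rs E (A \<inter> D) x x'" using step(1) True step(4) by (auto simp: rs_def)
    then have "(rs E (A \<inter> D))\<^sup>*\<^sup>* x a" using ab(1) by (rule converse_rtranclp_into_rtranclp)
    then show ?thesis using ab by blast
  next
    case False
    then show ?thesis using step.hyps(1) step.prems(1) by blast
  qed
qed

definition tree_on :: "'a set \<Rightarrow> ('a \<Rightarrow> 'a \<Rightarrow> bool) \<Rightarrow> 'a \<Rightarrow> ('a \<Rightarrow> 'a) \<Rightarrow> ('a \<Rightarrow> nat) \<Rightarrow> bool" where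
  "tree_on U E r par dep \<longleftrightarrow> r \<in> U \<and> dep r = 0 \<and>
     (\<forall>v\<in>U. v \<noteq> r \<longrightarrow> par v \<in> U \<and> E v (par v) \<and> dep v = Suc (dep (par v)))"

definition normal_on :: "'a set \<Rightarrow> ('a \<Rightarrow> 'a \<Rightarrow> bool) \<Rightarrow> ('a \<Rightarrow> 'a) \<Rightarrow> ('a \<Rightarrow> nat) \<Rightarrow> bool" where
  "normal_on U E par dep \<longleftrightarrow> (\<forall>u\<in>U. \<forall>v\<in>U. E u v \<longrightarrow>
     (\<exists>i\<le>dep u. (par^^i) u = v) \<or> (\<exists>i\<le>dep v. (par^^i) v = u))"

lemma tree_iter:
  assumes "tree_on U E r par dep" "v \<in> U" "i \<le> dep v"
  shows "(par^^i) v \<in> U \<and> dep ((par^^i) v) = dep v - i"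
  using assms(3)
proof (induction i)
  case 0 then show ?case using assms by simp
next
  case (Suc i)
  let ?w = "(par^^i) v"
  have w: "?w \<in> U" "dep ?w = dep v - i" using Suc by auto
  have "?w \<noteq> r" using w Suc.prems assms(1) by (auto simp: tree_on_def)
  then have "par ?w \<in> U" "dep ?w = Suc (dep (par ?w))" using w assms(1) by (auto simp: tree_on_def)
  then show ?case using w by simp
qed

lemma normal_tree_exists:
  assumes "finite U" "induced_connected E U" "r \<in> U"
    and sym: "\<And>u v. E u v \<Longrightarrow> E v u" and irr: "\<And>x. \<not> E x x"
  shows "\<exists>par dep. tree_on U E r par dep \<and> normal_on U E par dep"
  using assms(1-3)
proof (induction "card U" arbitrary: U r rule: less_induct)
  case less
  show ?case
  proof (cases "U = {r}")
    case True
    have "tree_on U E r id (\<lambda>_. 0)" using True by (simp add: tree_on_def)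
    moreover have "normal_on U E id (\<lambda>_. 0)" using True by (auto simp: normal_on_def)
    ultimately show ?thesis by blast
  next
    case False
    then obtain z where z: "z \<in> U" "z \<noteq> r" using less.prems by blast
    then have "(rs E U)\<^sup>*\<^sup>* r z" using less.prems by (simp add: ic_def')
    then obtain c where c1: "rs E U r c" using z(2) by (cases rule: converse_rtranclpE) auto
    then have c: "c \<in> U" "c \<noteq> r" "E r c" using irr by (auto simp: rs_def)
    define K where "K = {v. (rs E (U - {r}))\<^sup>*\<^sup>* c v}"
    define W where "W = U - K"
    have cK: "c \<in> K" by (simp add: K_def)
    have KU: "K \<subseteq> U - {r}"
    proof
      fix x assume "x \<in> K"
      then have "(rs E (U - {r}))\<^sup>*\<^sup>* c x" by (simp add: K_def)
      then show "x \<in> U - {r}" using rs_in c by fastforce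
    qed
    have Kc: "(rs E K)\<^sup>*\<^sup>* c v" if "v \<in> K" for v
    proof -
      have "(rs E (U - {r}))\<^sup>*\<^sup>* c v" using that by (simp add: K_def)
      then show ?thesis
      proof (induction rule: rtranclp_induct)
        case base then show ?case by simp
      next
        case (step y z)
        then have "rs E K y z" by (auto simp: rs_def K_def intro: rtranclp.rtrancl_into_rtrancl)
        with step.IH show ?case by (rule rtranclp.rtrancl_into_rtrancl)
      qed
    qed
    have Kconn: "induced_connected E K"
      unfolding ic_def'
    proof (intro ballI)
      fix x y assume xy: "x \<in> K" "y \<in> K"
      have "(rs E K)\<^sup>*\<^sup>* x c" by (rule rs_sym[OF sym Kc[OF xy(1)]])
      then show "(rs E K)\<^sup>*\<^sup>* x y" using Kc[OF xy(2)] by (rule rtranclp_trans)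
    qed
    have rW: "r \<in> W" using KU less.prems by (auto simp: W_def)
    have Wr: "(rs E W)\<^sup>*\<^sup>* v r" if "v \<in> W" for v
    proof -
      have "(rs E U)\<^sup>*\<^sup>* v r" using that less.prems by (auto simp: ic_def' W_def)
      then show ?thesis using that
      proof (induction rule: converse_rtranclp_induct)
        case base then show ?case by simp
      next
        case (step x x')
        show ?case
        proof (cases "x' \<in> W")
          case True
          then have "rs E W x x'" using step by (auto simp: rs_def)
          moreover have "(rs E W)\<^sup>*\<^sup>* x' r" using step.IH True by blast
          ultimately show ?thesis by (rule converse_rtranclp_into_rtranclp)
        next
          case False
          then have x'K: "x' \<in> K" using step by (auto simp: W_def rs_def)
          show ?thesis
          proof (cases "x = r")
            case True then show ?thesis by simp
          next
            case False
            then have "rs E (U - {r}) x' x" using step x'K KU sym by (auto simp: rs_def)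
            then have "x \<in> K" using x'K by (auto simp: K_def intro: rtranclp.rtrancl_into_rtrancl)
            then show ?thesis using step by (simp add: W_def)
          qed
        qed
      qed
    qed
    have Wconn: "induced_connected E W"
      unfolding ic_def'
    proof (intro ballI)
      fix x y assume xy: "x \<in> W" "y \<in> W"
      have "(rs E W)\<^sup>*\<^sup>* r y" by (rule rs_sym[OF sym Wr[OF xy(2)]])
      with Wr[OF xy(1)] show "(rs E W)\<^sup>*\<^sup>* x y" by (rule rtranclp_trans)
    qed
    have fin: "finite K" "finite W" using less.prems KU by (auto simp: W_def intro: finite_subset)
    have "card K < card U" 
    proof (rule psubset_card_mono[OF less.prems(1)])
      show "K \<subset> U" using KU less.prems(3) by blast
    qed
    then obtain pK dK where tK: "tree_on K E c pK dK" "normal_on K E pK dK"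
      using less.hyps fin Kconn cK by blast
    have "card W < card U" 
    proof (rule psubset_card_mono[OF less.prems(1)])
      show "W \<subset> U" using cK c(1) by (auto simp: W_def)
    qed
    then obtain pW dW where tW: "tree_on W E r pW dW" "normal_on W E pW dW"
      using less.hyps fin Wconn rW by blast
    define par where "par v = (if v \<in> K then (if v = c then r else pK v) else pW v)" for v
    define dep where "dep v = (if v \<in> K then Suc (dK v) else dW v)" for v
    have iterK: "(par^^i) v = (pK^^i) v" if "v \<in> K" "i \<le> dK v" for v i
      using that(2)
    proof (induction i)
      case 0 then show ?case by simp
    next
      case (Suc i)
      have w: "(pK^^i) v \<in> K" "dK ((pK^^i) v) = dK v - i" using tree_iter[OF tK(1) that(1)] Suc by auto
      then have "(pK^^i) v \<noteq> c" using tK(1) Suc.prems by (auto simp: tree_on_def)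
      then show ?case using Suc w by (simp add: par_def)
    qed
    have iterK2: "(par^^(dep v)) v = r" if "v \<in> K" for v
    proof -
      have w: "(pK^^(dK v)) v \<in> K" "dK ((pK^^(dK v)) v) = 0" using tree_iter[OF tK(1) that] by auto
      have "(pK^^(dK v)) v = c"
      proof (rule ccontr)
        assume "(pK^^(dK v)) v \<noteq> c"
        then show False using w tK(1) by (auto simp: tree_on_def)
      qed
      then show ?thesis using iterK[OF that order.refl] that by (simp add: dep_def par_def cK)
    qed
    have iterW: "(par^^i) v = (pW^^i) v" if "v \<in> W" "i \<le> dW v" for v i
      using that(2)
    proof (induction i)
      case 0 then show ?case by simp
    next
      case (Suc i)
      have w: "(pW^^i) v \<in> W" using tree_iter[OF tW(1) that(1)] Suc by auto
      then show ?case using Suc by (simp add: par_def W_def)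
    qed
    have "tree_on U E r par dep"
      unfolding tree_on_def
    proof (intro conjI)
      show "r \<in> U" by fact
      show "dep r = 0" using KU tW(1) by (auto simp: dep_def tree_on_def)
      show "\<forall>v\<in>U. v \<noteq> r \<longrightarrow> par v \<in> U \<and> E v (par v) \<and> dep v = Suc (dep (par v))"
      proof (intro ballI impI)
      fix v assume v: "v \<in> U" "v \<noteq> r"
      show "par v \<in> U \<and> E v (par v) \<and> dep v = Suc (dep (par v))"
      proof (cases "v \<in> K")
        case True
        show ?thesis
        proof (cases "v = c")
          case True
          then show ?thesis using c sym tK(1) tW(1) KU \<open>v \<in> K\<close> less.prems
            by (auto simp: par_def dep_def tree_on_def)
        next
          case False
          then show ?thesis using tK(1) KU \<open>v \<in> K\<close>
            by (auto simp: par_def dep_def tree_on_def)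
        qed
      next
        case False
        then have "v \<in> W" using v by (simp add: W_def)
        then show ?thesis using tW(1) v False by (auto simp: par_def dep_def tree_on_def W_def)
      qed
      qed
    qed
    moreover have "normal_on U E par dep"
      unfolding normal_on_def
    proof (intro ballI impI)
      fix u v assume uv: "u \<in> U" "v \<in> U" "E u v"
      have cross: "(\<exists>i\<le>dep a. (par^^i) a = b)" if "a \<in> K" "b \<notin> K" "b \<in> U" "E a b" for a b
      proof -
        have "b = r"
        proof (rule ccontr)
          assume "b \<noteq> r"
          then have "rs E (U - {r}) a b" using that KU by (auto simp: rs_def)
          then have "b \<in> K" using that(1) by (auto simp: K_def intro: rtranclp.rtrancl_into_rtrancl)
          then show False using that by simp
        qed
        then show ?thesis using iterK2[OF that(1)] by auto
      qed
      show "(\<exists>i\<le>dep u. (par^^i) u = v) \<or> (\<exists>i\<le>dep v. (par^^i) v = u)"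
      proof (cases "u \<in> K"; cases "v \<in> K")
        assume a: "u \<in> K" "v \<in> K"
        then have "(\<exists>i\<le>dK u. (pK^^i) u = v) \<or> (\<exists>i\<le>dK v. (pK^^i) v = u)"
          using tK(2) uv by (auto simp: normal_on_def)
        then show ?thesis
        proof
          assume "\<exists>i\<le>dK u. (pK^^i) u = v"
          then obtain i where "i \<le> dK u" "(pK^^i) u = v" by blast
          then have "i \<le> dep u" "(par^^i) u = v" using iterK[OF a(1)] a by (auto simp: dep_def)
          then show ?thesis by blast
        next
          assume "\<exists>i\<le>dK v. (pK^^i) v = u"
          then obtain i where "i \<le> dK v" "(pK^^i) v = u" by blast
          then have "i \<le> dep v" "(par^^i) v = u" using iterK[OF a(2)] a by (auto simp: dep_def)
          then show ?thesis by blast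
        qed
      next
        assume a: "u \<in> K" "v \<notin> K"
        then show ?thesis using cross uv by blast
      next
        assume a: "u \<notin> K" "v \<in> K"
        then show ?thesis using cross uv sym by blast
      next
        assume a: "u \<notin> K" "v \<notin> K"
        then have a': "u \<in> W" "v \<in> W" using uv by (auto simp: W_def)
        then have "(\<exists>i\<le>dW u. (pW^^i) u = v) \<or> (\<exists>i\<le>dW v. (pW^^i) v = u)"
          using tW(2) uv by (auto simp: normal_on_def)
        then show ?thesis
        proof
          assume "\<exists>i\<le>dW u. (pW^^i) u = v"
          then obtain i where "i \<le> dW u" "(pW^^i) u = v" by blast
          then have "i \<le> dep u" "(par^^i) u = v" using iterW[OF a'(1)] a by (auto simp: dep_def)
          then show ?thesis by blast
        next
          assume "\<exists>i\<le>dW v. (pW^^i) v = u"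
          then obtain i where "i \<le> dW v" "(pW^^i) v = u" by blast
          then have "i \<le> dep v" "(par^^i) v = u" using iterW[OF a'(2)] a by (auto simp: dep_def)
          then show ?thesis by blast
        qed
      qed
    qed
    ultimately show ?thesis by blast
  qed
qed

theorem theorem3:
  fixes V :: "'a set" and E :: "'a \<Rightarrow> 'a \<Rightarrow> bool"
  assumes "simple_graph V E"
    and "two_connected V E"
  shows "Fc V E \<le> card V - girth V E + 2"
proof -
  have finV: "finite V" and Ein: "\<And>x y. E x y \<Longrightarrow> x \<in> V \<and> y \<in> V"
    and sym: "\<And>x y. E x y \<Longrightarrow> E y x" and irr: "\<And>x. \<not> E x x"
    using assms(1) by (auto simp: simple_graph_def)
  have c3: "card V \<ge> 3" and conV: "induced_connected E V"
    and con1: "\<And>v. v \<in> V \<Longrightarrow> induced_connected E (V - {v})"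
    using assms(2) by (auto simp: two_connected_def)
  have "V \<noteq> {}" using c3 by auto
  then obtain r where r: "r \<in> V" by blast
  obtain par dep where tr: "tree_on V E r par dep" and nr: "normal_on V E par dep"
    using normal_tree_exists[OF finV conV r sym irr] by blast
  have dep_r: "dep r = 0" using tr by (simp add: tree_on_def)
  have trv: "par v \<in> V \<and> E v (par v) \<and> dep v = Suc (dep (par v))" if "v \<in> V" "v \<noteq> r" for v
    using tr that by (simp add: tree_on_def)
  have iter: "(par^^i) v \<in> V \<and> dep ((par^^i) v) = dep v - i" if "v \<in> V" "i \<le> dep v" for v i
    using tree_iter[OF tr that] .
  have notr: "v \<noteq> r" if "dep v > 0" for v using that dep_r by auto
  have root: "v = r" if "v \<in> V" "dep v = 0" for v using trv[OF that(1)] that(2) by auto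
  have cyc_ex: "\<exists>cs. is_cycle V E cs \<and> length cs = Suc d"
    if y: "y \<in> V" "2 \<le> d" "d \<le> dep y" "E y ((par^^d) y)" for y d
  proof -
    define cs where "cs = map (\<lambda>i. (par^^i) y) [0..<Suc d]"
    have len: "length cs = Suc d" by (simp add: cs_def)
    have "inj_on (\<lambda>i. (par^^i) y) {0..<Suc d}"
    proof (rule inj_onI)
      fix i j assume ij: "i \<in> {0..<Suc d}" "j \<in> {0..<Suc d}" "(par^^i) y = (par^^j) y"
      then have "dep ((par^^i) y) = dep ((par^^j) y)" by simp
      then show "i = j" using iter[OF y(1), of i] iter[OF y(1), of j] ij y(3) by auto
    qed
    then have dist: "distinct cs" by (simp add: cs_def distinct_map del: upt_Suc)
    have sub: "set cs \<subseteq> V" using iter[OF y(1)] y(3) by (auto simp: cs_def)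
    have adj: "E (cs ! i) (cs ! ((i + 1) mod length cs))" if i: "i < length cs" for i
    proof (cases "i < d")
      case True
      have w: "(par^^i) y \<in> V" "dep ((par^^i) y) = dep y - i" using iter[OF y(1), of i] True y(3) by auto
      then have "(par^^i) y \<noteq> r" using True y(3) notr by auto
      then have "E ((par^^i) y) (par ((par^^i) y))" using trv w by blast
      moreover have "(i + 1) mod length cs = Suc i" using True len by simp
      ultimately show ?thesis using True len by (simp add: cs_def nth_append del: upt_Suc)
    next
      case False
      then have "i = d" using i len by simp
      then show ?thesis using len sym[OF y(4)] by (simp add: cs_def del: upt_Suc)
    qed
    have "is_cycle V E cs" unfolding is_cycle_def using len y(2) dist sub adj by auto
    then show ?thesis using len by blast
  qed
  have cyc: "girth V E \<le> Suc d"
    if "y \<in> V" "2 \<le> d" "d \<le> dep y" "E y ((par^^d) y)" for y d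
    unfolding girth_def by (rule Least_le) (use cyc_ex[OF that] in blast)
  obtain l where l: "l \<in> V" "\<And>v. v \<in> V \<Longrightarrow> dep v \<le> dep l"
  proof -
    have "Max (dep ` V) \<in> dep ` V" using finV \<open>V \<noteq> {}\<close> by simp
    then obtain l where "l \<in> V" "dep l = Max (dep ` V)" by auto
    moreover have "\<And>v. v \<in> V \<Longrightarrow> dep v \<le> Max (dep ` V)" using finV by simp
    ultimately show ?thesis using that by metis
  qed
  have "l \<noteq> r"
  proof
    assume "l = r"
    have "\<And>v. v \<in> V \<Longrightarrow> v = r"
    proof -
      fix v assume "v \<in> V"
      then have "dep v \<le> dep r" using l(2) \<open>l = r\<close> by simp
      then show "v = r" using root[OF \<open>v \<in> V\<close>] dep_r by simp
    qed
    then have "V \<subseteq> {r}" by blast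
    then have "card V \<le> card {r}" by (intro card_mono) auto
    then show False using c3 by simp
  qed
  then have pl: "par l \<in> V" "E l (par l)" "dep l = Suc (dep (par l))" using trv l(1) by auto
  obtain z where z: "z \<in> V" "z \<noteq> par l" "z \<noteq> l"
  proof -
    have "\<not> V \<subseteq> {par l, l}"
    proof
      assume "V \<subseteq> {par l, l}"
      then have "card V \<le> card {par l, l}" by (intro card_mono) auto
      also have "\<dots> \<le> 2" by (simp add: card_insert_if)
      finally show False using c3 by simp
    qed
    then show ?thesis using that by blast
  qed
  have "(rs E (V - {par l}))\<^sup>*\<^sup>* l z"
    using con1[OF pl(1)] z l(1) pl(2) irr by (auto simp: ic_def')
  then obtain w where "rs E (V - {par l}) l w" using z(3)
    by (cases rule: converse_rtranclpE) auto
  then have w: "E l w" "w \<noteq> par l" "w \<noteq> l" "w \<in> V" using irr by (auto simp: rs_def)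
  have "(\<exists>i\<le>dep l. (par^^i) l = w) \<or> (\<exists>i\<le>dep w. (par^^i) w = l)"
    using nr l(1) w by (auto simp: normal_on_def)
  then obtain i where i: "i \<le> dep l" "(par^^i) l = w"
  proof
    assume "\<exists>i\<le>dep l. (par^^i) l = w"
    then show ?thesis using that by blast
  next
    assume "\<exists>i\<le>dep w. (par^^i) w = l"
    then obtain i where "i \<le> dep w" "(par^^i) w = l" by blast
    then have "dep l = dep w - i" using iter[OF w(4)] by metis
    moreover have "dep w \<le> dep l" using l(2) w(4) by blast
    ultimately have "i = 0" using pl(3) by linarith
    then show ?thesis using \<open>(par^^i) w = l\<close> w(3) by simp
  qed
  have "i \<noteq> 0"
  proof
    assume "i = 0" then show False using i w(3) by simp
  qed
  moreover have "i \<noteq> 1"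
  proof
    assume "i = 1" then show False using i w(2) by simp
  qed
  ultimately have i2: "2 \<le> i" by simp
  have ex_cyc: "\<exists>k cs. is_cycle V E cs \<and> length cs = k"
    using cyc_ex[OF l(1) i2 i(1)] i(2) w(1) by blast
  define g where "g = girth V E"
  have "\<exists>cs. is_cycle V E cs \<and> length cs = g"
    unfolding g_def girth_def by (rule LeastI_ex) (use ex_cyc in blast)
  then obtain cs0 where cs0: "is_cycle V E cs0" "length cs0 = g" by blast
  have g3: "g \<ge> 3" using cs0 by (simp add: is_cycle_def)
  have gV: "g \<le> card V"
  proof -
    have "g = card (set cs0)" using cs0 by (simp add: is_cycle_def distinct_card)
    also have "\<dots> \<le> card V" using cs0 finV by (intro card_mono) (auto simp: is_cycle_def)
    finally show ?thesis .
  qed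
  have gl: "g \<le> Suc (dep l)"
    using cyc[OF l(1) i2 i(1)] i(2) w(1) i(1) unfolding g_def by simp
  define k where "k = g - 2"
  define x where "x i = (par^^i) l" for i
  have kl: "k + 1 \<le> dep l" "1 \<le> k" using gl g3 by (auto simp: k_def)
  have comp: "(par^^a) ((par^^b) y) = (par^^(a+b)) y" for a b y by (simp add: funpow_add)
  have xf: "x i \<in> V \<and> dep (x i) = dep l - i" if "i \<le> dep l" for i
    using iter[OF l(1) that] by (simp add: x_def)
  have xinj: "i = j" if "i \<le> dep l" "j \<le> dep l" "x i = x j" for i j
    using xf[OF that(1)] xf[OF that(2)] that by auto
  have xpar: "par (x i) = x (Suc i)" for i by (simp add: x_def)
  have xE: "E (x i) (x (Suc i))" if "i < dep l" for i
  proof -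
    have "x i \<noteq> r" using xf[of i] that notr by auto
    moreover have "x i \<in> V" using xf[of i] that by simp
    ultimately have "E (x i) (par (x i))" using trv by blast
    then show ?thesis by (simp only: xpar)
  qed
  have gap: False if "E (x a) (x b)" "a + 2 \<le> b" "b \<le> k" for a b
  proof -
    have "x b = (par^^(b-a)) (x a)" using that(2) by (simp add: x_def comp)
    moreover have "b - a \<le> dep (x a)" using xf[of a] that kl by auto
    moreover have "x a \<in> V" using xf[of a] that kl by auto
    ultimately have "g \<le> Suc (b - a)" using cyc[of "x a" "b - a"] that unfolding g_def by auto
    then show False using that g3 k_def by linarith
  qed
  define P where "P = x ` {..<k}"
  define S where "S = V - P"
  have PV: "P \<subseteq> V" using xf kl by (auto simp: P_def)
  have cardP: "card P = k"
  proof -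
    have "inj_on x {..<k}" using xinj kl by (intro inj_onI) auto
    then show ?thesis by (simp add: P_def card_image)
  qed
  have cardS: "card S = card V - k" using PV finV cardP by (simp add: S_def card_Diff_subset finite_subset)
  have xkS: "x k \<in> S"
  proof -
    have "x k \<notin> P"
    proof
      assume "x k \<in> P"
      then obtain j where "j < k" "x k = x j" by (auto simp: P_def)
      then show False using xinj[of k j] kl by auto
    qed
    then show ?thesis using xf[of k] kl by (simp add: S_def)
  qed
  have xF: "x i \<in> forced E S" if "i \<le> k" for i
    using that
  proof (induction "k - i" arbitrary: i rule: less_induct)
    case less
    show ?case
    proof (cases "i = k")
      case True then show ?thesis using xkS by (simp add: forced.init)
    next
      case False
      then have ik: "i < k" using less.prems by simp
      have u: "x (Suc i) \<in> forced E S" using less.hyps[of "Suc i"] ik by simp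
      have e: "E (x (Suc i)) (x i)" using xE[of i] ik kl sym by auto
      have oth: "\<forall>w'. E (x (Suc i)) w' \<and> w' \<noteq> x i \<longrightarrow> w' \<in> forced E S"
      proof (intro allI impI)
        fix w' assume a: "E (x (Suc i)) w' \<and> w' \<noteq> x i"
        show "w' \<in> forced E S"
        proof (cases "w' \<in> S")
          case True then show ?thesis by (rule forced.init)
        next
          case False
          then have "w' \<in> P" using a Ein by (auto simp: S_def)
          then obtain j where j: "j < k" "w' = x j" by (auto simp: P_def)
          show ?thesis
          proof (cases "j < i")
            case True
            then have "E (x j) (x (Suc i))" using a j sym by auto
            then show ?thesis using gap[of j "Suc i"] True ik by simp
          next
            case False
            then have "j > i" using a j by (cases "j = i") auto
            then show ?thesis using less.hyps[of j] j by auto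
          qed
        qed
      qed
      show ?thesis by (rule forced.force[OF u e oth])
    qed
  qed
  have VF: "V \<subseteq> forced E S"
  proof
    fix v assume "v \<in> V"
    show "v \<in> forced E S"
    proof (cases "v \<in> S")
      case True then show ?thesis by (rule forced.init)
    next
      case False
      then obtain j where "j < k" "v = x j" using \<open>v \<in> V\<close> by (auto simp: S_def P_def)
      then show ?thesis using xF[of j] by simp
    qed
  qed
  have rS: "r \<in> S"
  proof -
    have "r \<notin> P"
    proof
      assume "r \<in> P"
      then obtain j where "j < k" "r = x j" by (auto simp: P_def)
      then show False using xf[of j] kl dep_r by auto
    qed
    then show ?thesis using r by (simp add: S_def)
  qed
  have toroot: "(rs E S)\<^sup>*\<^sup>* v r" if "v \<in> S" for v
    using that
  proof (induction "dep v" arbitrary: v rule: less_induct)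
    case less
    show ?case
    proof (cases "v = r")
      case True then show ?thesis by simp
    next
      case vr: False
      have vV: "v \<in> V" using less.prems by (simp add: S_def)
      define p where "p = par v"
      have pv: "p \<in> V" "E v p" "dep v = Suc (dep p)" using trv[OF vV vr] by (auto simp: p_def)
      show ?thesis
      proof (cases "p \<in> S")
        case True
        have "(rs E S)\<^sup>*\<^sup>* p r" using less.hyps[of p] True pv by simp
        moreover have "rs E S v p" using pv less.prems True by (simp add: rs_def)
        ultimately show ?thesis by (metis converse_rtranclp_into_rtranclp)
      next
        case False
        then have "p \<in> P" using pv by (simp add: S_def)
        then obtain i where i: "i < k" "p = x i" by (auto simp: P_def)
        have depp: "dep p = dep l - i" using xf[of i] i kl by auto
        have "i \<noteq> 0" using pv depp l(2)[OF vV] by auto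
        have pr: "p \<noteq> r" using depp i kl dep_r by auto
        have vp: "v \<noteq> p" using less.prems \<open>p \<in> P\<close> by (auto simp: S_def)
        have path: "(rs E (V - {p}))\<^sup>*\<^sup>* v r"
          using con1[OF pv(1)] vV r vp pr by (auto simp: ic_def')
        define D where "D = {y \<in> V. \<exists>m\<le>dep y. (par^^m) y = v}"
        have vD: "v \<in> D" using vV by (auto simp: D_def intro: exI[of _ 0])
        have rD: "r \<notin> D" using vr dep_r by (auto simp: D_def)
        obtain a b where ab: "(rs E ((V - {p}) \<inter> D))\<^sup>*\<^sup>* v a" "a \<in> D"
          "rs E (V - {p}) a b" "b \<notin> D"
          using first_exit[OF path vD rD] by blast
        have DP: "D \<inter> P = {}"
        proof (rule ccontr)
          assume "D \<inter> P \<noteq> {}"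
          then obtain j m where j: "j < k" "m \<le> dep (x j)" "(par^^m) (x j) = v"
            by (auto simp: D_def P_def)
          have vx: "v = x (m + j)" using j(3) by (simp add: x_def comp)
          have mj: "m + j \<le> dep l" using j xf[of j] kl by auto
          have "dep v > 0" using root[OF vV] vr by auto
          then have "m + j < dep l" using xf[OF mj] vx by auto
          then have "p = x (Suc (m + j))" using vx xpar p_def by simp
          then have "i = Suc (m + j)" using xinj[of i "Suc (m+j)"] i kl \<open>m + j < dep l\<close> by auto
          then have "v \<in> P" using vx i by (auto simp: P_def)
          then show False using less.prems by (simp add: S_def)
        qed
        have "(rs E S)\<^sup>*\<^sup>* v a"
          by (rule rs_mono[OF ab(1)]) (use DP in \<open>auto simp: S_def\<close>)
        have b: "E a b" "b \<in> V" "b \<noteq> p" using ab(3) by (auto simp: rs_def)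
        obtain ma where ma: "a \<in> V" "ma \<le> dep a" "(par^^ma) a = v" using ab(2) by (auto simp: D_def)
        have "(\<exists>m\<le>dep a. (par^^m) a = b) \<or> (\<exists>m\<le>dep b. (par^^m) b = a)"
          using nr ma(1) b by (auto simp: normal_on_def)
        then obtain m where m: "m \<le> dep a" "(par^^m) a = b"
        proof
          assume "\<exists>m\<le>dep a. (par^^m) a = b"
          then show ?thesis using that by blast
        next
          assume "\<exists>m\<le>dep b. (par^^m) b = a"
          then obtain m where m: "m \<le> dep b" "(par^^m) b = a" by blast
          have "dep a = dep b - m" using iter[OF b(2) m(1)] m(2) by simp
          then have "ma + m \<le> dep b" using ma m by simp
          moreover have "(par^^(ma + m)) b = v"
            using m(2) ma(3) comp[of ma m b, symmetric] by simp
          ultimately have "b \<in> D" using b by (auto simp: D_def)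
          then show ?thesis using ab(4) by simp
        qed
        have depb: "dep b = dep a - m" using iter[OF ma(1) m(1)] m(2) by simp
        have "\<not> m \<le> ma"
        proof
          assume "m \<le> ma"
          then have "(par^^(ma - m)) b = v" using m ma comp[of "ma - m" m a] by simp
          moreover have "ma - m \<le> dep b" using depb ma \<open>m \<le> ma\<close> by simp
          ultimately have "b \<in> D" using b by (auto simp: D_def)
          then show False using ab(4) by simp
        qed
        then have bv: "b = (par^^(m - ma)) v" using m ma comp[of "m - ma" ma a] by simp
        have "m - ma \<noteq> 1" using bv b(3) p_def by auto
        then have m2: "2 \<le> m" "dep b < dep v" using \<open>\<not> m \<le> ma\<close> depb ma m(1) iter[OF ma(1) ma(2)] by auto
        have bS: "b \<in> S"
        proof (rule ccontr)
          assume "b \<notin> S"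
          then obtain j where j: "j < k" "b = x j" using b by (auto simp: S_def P_def)
          have "g \<le> Suc m" using cyc[OF ma(1) m2(1) m(1)] m b(1) unfolding g_def by simp
          moreover have "dep a \<le> dep l" using l(2) ma(1) by simp
          moreover have "dep b = dep l - j" using xf[of j] j kl by auto
          ultimately show False using depb m(1) j g3 k_def by linarith
        qed
        have "(rs E S)\<^sup>*\<^sup>* b r" using less.hyps[of b] m2 bS by simp
        moreover have "rs E S a b"
        proof -
          have "a \<in> S" using ab(2) DP ma(1) by (auto simp: S_def)
          then show ?thesis using b(1) bS by (simp add: rs_def)
        qed
        ultimately have "(rs E S)\<^sup>*\<^sup>* a r" by (metis converse_rtranclp_into_rtranclp)
        with \<open>(rs E S)\<^sup>*\<^sup>* v a\<close> show ?thesis by (rule rtranclp_trans)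
      qed
    qed
  qed
  have conS: "induced_connected E S"
    unfolding ic_def'
  proof (intro ballI)
    fix a b assume ab: "a \<in> S" "b \<in> S"
    have "(rs E S)\<^sup>*\<^sup>* r b" by (rule rs_sym[OF sym toroot[OF ab(2)]])
    with toroot[OF ab(1)] show "(rs E S)\<^sup>*\<^sup>* a b" by (rule rtranclp_trans)
  qed
  have "connected_forcing_set V E S"
    using conS VF by (auto simp: connected_forcing_set_def forcing_set_def S_def)
  then have "Fc V E \<le> card S" unfolding Fc_def by (intro Least_le) blast
  then show ?thesis using cardS k_def g_def g3 gV by linarith
qed

end
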